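(* Let $\kappa=\frac4{27}$ and let $a,b,c,d>0$. Then the recurrence coefficients defined in the context satisfy $\beta_n=3\kappa$, $\alpha_{n+1}=3\kappa^2$ and $\gamma_{n+1}=\kappa^3$ for all integers $n\ge1$ (i.e. the Jacobi matrix coincides with the banded Toeplitz matrix with diagonals $1,3\kappa,3\kappa^2,\kappa^3$ except possibly in its first column) if and only if $(a,b,c,d)$ is one of the twelve tuples $(\frac13,\frac23,\frac12,1)$, $(\frac23,\frac13,\frac12,1)$, $(\frac13,\frac23,1,\frac32)$, $(\frac23,\frac13,1,\frac32)$, $(\frac23,\frac43,1,\frac32)$, $(\frac43,\frac23,1,\frac32)$, $(\frac23,\frac43,\frac32,2)$, $(\frac43,\frac23,\frac32,2)$, $(\frac43,\frac53,\frac32,2)$, $(\frac53,\frac43,\frac32,2)$, $(\frac43,\frac53,2,\frac52)$, $(\frac53,\frac43,2,\frac52)$.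
   Context: Let $c_{-1}=c$ and for $k\ge0$ $c_{2k}=d+k$, $c_{2k+1}=c+k+1$. Put $\lambda_0=\lambda_1=0$, and for $n\ge1$: $\lambda_{3n}=\frac{n(b+n-1)(c_n-a-1)}{(c_n+n-2)(c_n+n-1)(c_{n-1}+n-1)}$, $\lambda_{3n+1}=\frac{n(a+n)(c_{n-1}-b)}{(c_n+n-1)(c_{n-1}+n-1)(c_{n-1}+n)}$; for $n\ge0$: $\lambda_{3n+2}=\frac{(a+n)(b+n)(c_n-1)}{(c_n+n-1)(c_n+n)(c_{n-1}+n)}$. For $n\ge0$: $\beta_n=\lambda_{3n}+\lambda_{3n+1}+\lambda_{3n+2}$, $\alpha_{n+1}=(\lambda_{3n+1}+\lambda_{3n+2})\lambda_{3n+3}+\lambda_{3n+2}\lambda_{3n+4}$, $\gamma_{n+1}=\lambda_{3n+2}\lambda_{3n+4}\lambda_{3n+6}$. These are the entries of the Jacobi matrix $J$ ($J_{n,n+1}=1$, $J_{n,n}=\beta_n$, $J_{n+1,n}=\alpha_{n+1}$, $J_{n+2,n}=\gamma_{n+1}$) of the hypergeometric multiple orthogonal polynomials with parameters $(a,b,c,d)$. *)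

theory Defs
  imports Complex_Main
begin

text \<open>The sequence c_k for k \<ge> -1: c_{-1} = c, c_{2k} = d + k, c_{2k+1} = c + k + 1.
  Note c_{-1} = c agrees with the odd formula c + (k+1)/2 at k = -1.\<close>
definition cseq :: "real \<Rightarrow> real \<Rightarrow> int \<Rightarrow> real" where
  "cseq c d k = (if even k then d + real_of_int (k div 2) else c + real_of_int ((k + 1) div 2))"

definition lam :: "real \<Rightarrow> real \<Rightarrow> real \<Rightarrow> real \<Rightarrow> nat \<Rightarrow> real" where
  "lam a b c d m =
    (let n = m div 3; r = m mod 3; rn = real n;
         cn = cseq c d (int n); cn1 = cseq c d (int n - 1) in
     if m = 0 \<or> m = 1 then 0
     else if r = 0 then
       rn * (b + rn - 1) * (cn - a - 1) / ((cn + rn - 2) * (cn + rn - 1) * (cn1 + rn - 1))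
     else if r = 1 then
       rn * (a + rn) * (cn1 - b) / ((cn + rn - 1) * (cn1 + rn - 1) * (cn1 + rn))
     else
       (a + rn) * (b + rn) * (cn - 1) / ((cn + rn - 1) * (cn + rn) * (cn1 + rn)))"

definition beta_rc :: "real \<Rightarrow> real \<Rightarrow> real \<Rightarrow> real \<Rightarrow> nat \<Rightarrow> real" where
  "beta_rc a b c d n = lam a b c d (3*n) + lam a b c d (3*n+1) + lam a b c d (3*n+2)"

definition alpha_rc :: "real \<Rightarrow> real \<Rightarrow> real \<Rightarrow> real \<Rightarrow> nat \<Rightarrow> real" where
  "alpha_rc a b c d n = (lam a b c d (3*(n-1)+1) + lam a b c d (3*(n-1)+2)) * lam a b c d (3*(n-1)+3)
      + lam a b c d (3*(n-1)+2) * lam a b c d (3*(n-1)+4)"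
  \<comment> \<open>alpha_{n+1} for n \<ge> 0, i.e. meaningful for index \<ge> 1\<close>

definition gamma_rc :: "real \<Rightarrow> real \<Rightarrow> real \<Rightarrow> real \<Rightarrow> nat \<Rightarrow> real" where
  "gamma_rc a b c d n = lam a b c d (3*(n-1)+2) * lam a b c d (3*(n-1)+4) * lam a b c d (3*(n-1)+6)"
  \<comment> \<open>gamma_{n+1} for n \<ge> 0, i.e. meaningful for index \<ge> 1\<close>

end

theory Submission
  imports Defs "HOL-Computational_Algebra.Polynomial"
begin


definition nE0 :: "real \<Rightarrow> real \<Rightarrow> real \<Rightarrow> real \<Rightarrow> real \<Rightarrow> real" where
  "nE0 a b c d x = 2*x*(b+2*x-1)*(d+x-a-1)"

definition dE0 :: "real \<Rightarrow> real \<Rightarrow> real \<Rightarrow> real \<Rightarrow> real \<Rightarrow> real" where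
  "dE0 a b c d x = (d+3*x-2)*(d+3*x-1)*(c+3*x-1)"

definition nE1 :: "real \<Rightarrow> real \<Rightarrow> real \<Rightarrow> real \<Rightarrow> real \<Rightarrow> real" where
  "nE1 a b c d x = 2*x*(a+2*x)*(c+x-b)"

definition dE1 :: "real \<Rightarrow> real \<Rightarrow> real \<Rightarrow> real \<Rightarrow> real \<Rightarrow> real" where
  "dE1 a b c d x = (d+3*x-1)*(c+3*x-1)*(c+3*x)"

definition nE2 :: "real \<Rightarrow> real \<Rightarrow> real \<Rightarrow> real \<Rightarrow> real \<Rightarrow> real" where
  "nE2 a b c d x = (a+2*x)*(b+2*x)*(d+x-1)"

definition dE2 :: "real \<Rightarrow> real \<Rightarrow> real \<Rightarrow> real \<Rightarrow> real \<Rightarrow> real" where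
  "dE2 a b c d x = (d+3*x-1)*(d+3*x)*(c+3*x)"

definition nO0 :: "real \<Rightarrow> real \<Rightarrow> real \<Rightarrow> real \<Rightarrow> real \<Rightarrow> real" where
  "nO0 a b c d x = (2*x+1)*(b+2*x)*(c+x-a)"

definition dO0 :: "real \<Rightarrow> real \<Rightarrow> real \<Rightarrow> real \<Rightarrow> real \<Rightarrow> real" where
  "dO0 a b c d x = (c+3*x)*(c+3*x+1)*(d+3*x)"

definition nO1 :: "real \<Rightarrow> real \<Rightarrow> real \<Rightarrow> real \<Rightarrow> real \<Rightarrow> real" where
  "nO1 a b c d x = (2*x+1)*(a+2*x+1)*(d+x-b)"

definition dO1 :: "real \<Rightarrow> real \<Rightarrow> real \<Rightarrow> real \<Rightarrow> real \<Rightarrow> real" where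
  "dO1 a b c d x = (c+3*x+1)*(d+3*x)*(d+3*x+1)"

definition nO2 :: "real \<Rightarrow> real \<Rightarrow> real \<Rightarrow> real \<Rightarrow> real \<Rightarrow> real" where
  "nO2 a b c d x = (a+2*x+1)*(b+2*x+1)*(c+x)"

definition dO2 :: "real \<Rightarrow> real \<Rightarrow> real \<Rightarrow> real \<Rightarrow> real \<Rightarrow> real" where
  "dO2 a b c d x = (c+3*x+1)*(c+3*x+2)*(d+3*x+1)"


definition NBE :: "real \<Rightarrow> real \<Rightarrow> real \<Rightarrow> real \<Rightarrow> real \<Rightarrow> real" where
  "NBE a b c d x = nE0 a b c d x * dE1 a b c d x * dE2 a b c d x + nE1 a b c d x * dE0 a b c d x * dE2 a b c d x
     + nE2 a b c d x * dE0 a b c d x * dE1 a b c d x - 3*(4/27) * (dE0 a b c d x * dE1 a b c d x * dE2 a b c d x)"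

definition NBO :: "real \<Rightarrow> real \<Rightarrow> real \<Rightarrow> real \<Rightarrow> real \<Rightarrow> real" where
  "NBO a b c d x = nO0 a b c d x * dO1 a b c d x * dO2 a b c d x + nO1 a b c d x * dO0 a b c d x * dO2 a b c d x
     + nO2 a b c d x * dO0 a b c d x * dO1 a b c d x - 3*(4/27) * (dO0 a b c d x * dO1 a b c d x * dO2 a b c d x)"

definition NAE :: "real \<Rightarrow> real \<Rightarrow> real \<Rightarrow> real \<Rightarrow> real \<Rightarrow> real" where
  "NAE a b c d x = (nE1 a b c d x * dE2 a b c d x + nE2 a b c d x * dE1 a b c d x) * nO0 a b c d x * dO1 a b c d x
     + nE2 a b c d x * nO1 a b c d x * dE1 a b c d x * dO0 a b c d x
     - 3*(4/27)^2 * (dE1 a b c d x * dE2 a b c d x * dO0 a b c d x * dO1 a b c d x)"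

definition NAO :: "real \<Rightarrow> real \<Rightarrow> real \<Rightarrow> real \<Rightarrow> real \<Rightarrow> real" where
  "NAO a b c d x = (nO1 a b c d x * dO2 a b c d x + nO2 a b c d x * dO1 a b c d x) * nE0 a b c d (x+1) * dE1 a b c d (x+1)
     + nO2 a b c d x * nE1 a b c d (x+1) * dO1 a b c d x * dE0 a b c d (x+1)
     - 3*(4/27)^2 * (dO1 a b c d x * dO2 a b c d x * dE0 a b c d (x+1) * dE1 a b c d (x+1))"

definition NGE :: "real \<Rightarrow> real \<Rightarrow> real \<Rightarrow> real \<Rightarrow> real \<Rightarrow> real" where
  "NGE a b c d x = nE2 a b c d x * nO1 a b c d x * nE0 a b c d (x+1)
     - (4/27)^3 * (dE2 a b c d x * dO1 a b c d x * dE0 a b c d (x+1))"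

definition NGO :: "real \<Rightarrow> real \<Rightarrow> real \<Rightarrow> real \<Rightarrow> real \<Rightarrow> real" where
  "NGO a b c d x = nO2 a b c d x * nE1 a b c d (x+1) * nO0 a b c d (x+1)
     - (4/27)^3 * (dO2 a b c d x * dE1 a b c d (x+1) * dO0 a b c d (x+1))"


definition pnE0 :: "real \<Rightarrow> real \<Rightarrow> real \<Rightarrow> real \<Rightarrow> real poly" where
  "pnE0 a b c d = [:0,2:]*[:b-1,2:]*[:d-a-1,1:]"


definition pnE0s :: "real \<Rightarrow> real \<Rightarrow> real \<Rightarrow> real \<Rightarrow> real poly" where
  "pnE0s a b c d = [:(0)+2,2:]*[:(b-1)+2,2:]*[:(d-a-1)+1,1:]"


definition rnE0 :: "real \<Rightarrow> real \<Rightarrow> real \<Rightarrow> real \<Rightarrow> real poly" where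
  "rnE0 a b c d = [:2,0:]*[:2,b-1:]*[:1,d-a-1:]"


definition rnE0s :: "real \<Rightarrow> real \<Rightarrow> real \<Rightarrow> real \<Rightarrow> real poly" where
  "rnE0s a b c d = [:2,(0)+2:]*[:2,(b-1)+2:]*[:1,(d-a-1)+1:]"


definition pdE0 :: "real \<Rightarrow> real \<Rightarrow> real \<Rightarrow> real \<Rightarrow> real poly" where
  "pdE0 a b c d = [:d-2,3:]*[:d-1,3:]*[:c-1,3:]"


definition pdE0s :: "real \<Rightarrow> real \<Rightarrow> real \<Rightarrow> real \<Rightarrow> real poly" where
  "pdE0s a b c d = [:(d-2)+3,3:]*[:(d-1)+3,3:]*[:(c-1)+3,3:]"


definition rdE0 :: "real \<Rightarrow> real \<Rightarrow> real \<Rightarrow> real \<Rightarrow> real poly" where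
  "rdE0 a b c d = [:3,d-2:]*[:3,d-1:]*[:3,c-1:]"


definition rdE0s :: "real \<Rightarrow> real \<Rightarrow> real \<Rightarrow> real \<Rightarrow> real poly" where
  "rdE0s a b c d = [:3,(d-2)+3:]*[:3,(d-1)+3:]*[:3,(c-1)+3:]"


definition pnE1 :: "real \<Rightarrow> real \<Rightarrow> real \<Rightarrow> real \<Rightarrow> real poly" where
  "pnE1 a b c d = [:0,2:]*[:a,2:]*[:c-b,1:]"


definition pnE1s :: "real \<Rightarrow> real \<Rightarrow> real \<Rightarrow> real \<Rightarrow> real poly" where
  "pnE1s a b c d = [:(0)+2,2:]*[:(a)+2,2:]*[:(c-b)+1,1:]"


definition rnE1 :: "real \<Rightarrow> real \<Rightarrow> real \<Rightarrow> real \<Rightarrow> real poly" where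
  "rnE1 a b c d = [:2,0:]*[:2,a:]*[:1,c-b:]"


definition rnE1s :: "real \<Rightarrow> real \<Rightarrow> real \<Rightarrow> real \<Rightarrow> real poly" where
  "rnE1s a b c d = [:2,(0)+2:]*[:2,(a)+2:]*[:1,(c-b)+1:]"


definition pdE1 :: "real \<Rightarrow> real \<Rightarrow> real \<Rightarrow> real \<Rightarrow> real poly" where
  "pdE1 a b c d = [:d-1,3:]*[:c-1,3:]*[:c,3:]"


definition pdE1s :: "real \<Rightarrow> real \<Rightarrow> real \<Rightarrow> real \<Rightarrow> real poly" where
  "pdE1s a b c d = [:(d-1)+3,3:]*[:(c-1)+3,3:]*[:(c)+3,3:]"


definition rdE1 :: "real \<Rightarrow> real \<Rightarrow> real \<Rightarrow> real \<Rightarrow> real poly" where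
  "rdE1 a b c d = [:3,d-1:]*[:3,c-1:]*[:3,c:]"


definition rdE1s :: "real \<Rightarrow> real \<Rightarrow> real \<Rightarrow> real \<Rightarrow> real poly" where
  "rdE1s a b c d = [:3,(d-1)+3:]*[:3,(c-1)+3:]*[:3,(c)+3:]"


definition pnE2 :: "real \<Rightarrow> real \<Rightarrow> real \<Rightarrow> real \<Rightarrow> real poly" where
  "pnE2 a b c d = [:a,2:]*[:b,2:]*[:d-1,1:]"


definition pnE2s :: "real \<Rightarrow> real \<Rightarrow> real \<Rightarrow> real \<Rightarrow> real poly" where
  "pnE2s a b c d = [:(a)+2,2:]*[:(b)+2,2:]*[:(d-1)+1,1:]"


definition rnE2 :: "real \<Rightarrow> real \<Rightarrow> real \<Rightarrow> real \<Rightarrow> real poly" where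
  "rnE2 a b c d = [:2,a:]*[:2,b:]*[:1,d-1:]"


definition rnE2s :: "real \<Rightarrow> real \<Rightarrow> real \<Rightarrow> real \<Rightarrow> real poly" where
  "rnE2s a b c d = [:2,(a)+2:]*[:2,(b)+2:]*[:1,(d-1)+1:]"


definition pdE2 :: "real \<Rightarrow> real \<Rightarrow> real \<Rightarrow> real \<Rightarrow> real poly" where
  "pdE2 a b c d = [:d-1,3:]*[:d,3:]*[:c,3:]"


definition pdE2s :: "real \<Rightarrow> real \<Rightarrow> real \<Rightarrow> real \<Rightarrow> real poly" where
  "pdE2s a b c d = [:(d-1)+3,3:]*[:(d)+3,3:]*[:(c)+3,3:]"


definition rdE2 :: "real \<Rightarrow> real \<Rightarrow> real \<Rightarrow> real \<Rightarrow> real poly" where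
  "rdE2 a b c d = [:3,d-1:]*[:3,d:]*[:3,c:]"


definition rdE2s :: "real \<Rightarrow> real \<Rightarrow> real \<Rightarrow> real \<Rightarrow> real poly" where
  "rdE2s a b c d = [:3,(d-1)+3:]*[:3,(d)+3:]*[:3,(c)+3:]"


definition pnO0 :: "real \<Rightarrow> real \<Rightarrow> real \<Rightarrow> real \<Rightarrow> real poly" where
  "pnO0 a b c d = [:1,2:]*[:b,2:]*[:c-a,1:]"


definition pnO0s :: "real \<Rightarrow> real \<Rightarrow> real \<Rightarrow> real \<Rightarrow> real poly" where
  "pnO0s a b c d = [:(1)+2,2:]*[:(b)+2,2:]*[:(c-a)+1,1:]"


definition rnO0 :: "real \<Rightarrow> real \<Rightarrow> real \<Rightarrow> real \<Rightarrow> real poly" where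
  "rnO0 a b c d = [:2,1:]*[:2,b:]*[:1,c-a:]"


definition rnO0s :: "real \<Rightarrow> real \<Rightarrow> real \<Rightarrow> real \<Rightarrow> real poly" where
  "rnO0s a b c d = [:2,(1)+2:]*[:2,(b)+2:]*[:1,(c-a)+1:]"


definition pdO0 :: "real \<Rightarrow> real \<Rightarrow> real \<Rightarrow> real \<Rightarrow> real poly" where
  "pdO0 a b c d = [:c,3:]*[:c+1,3:]*[:d,3:]"


definition pdO0s :: "real \<Rightarrow> real \<Rightarrow> real \<Rightarrow> real \<Rightarrow> real poly" where
  "pdO0s a b c d = [:(c)+3,3:]*[:(c+1)+3,3:]*[:(d)+3,3:]"


definition rdO0 :: "real \<Rightarrow> real \<Rightarrow> real \<Rightarrow> real \<Rightarrow> real poly" where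
  "rdO0 a b c d = [:3,c:]*[:3,c+1:]*[:3,d:]"


definition rdO0s :: "real \<Rightarrow> real \<Rightarrow> real \<Rightarrow> real \<Rightarrow> real poly" where
  "rdO0s a b c d = [:3,(c)+3:]*[:3,(c+1)+3:]*[:3,(d)+3:]"


definition pnO1 :: "real \<Rightarrow> real \<Rightarrow> real \<Rightarrow> real \<Rightarrow> real poly" where
  "pnO1 a b c d = [:1,2:]*[:a+1,2:]*[:d-b,1:]"


definition pnO1s :: "real \<Rightarrow> real \<Rightarrow> real \<Rightarrow> real \<Rightarrow> real poly" where
  "pnO1s a b c d = [:(1)+2,2:]*[:(a+1)+2,2:]*[:(d-b)+1,1:]"


definition rnO1 :: "real \<Rightarrow> real \<Rightarrow> real \<Rightarrow> real \<Rightarrow> real poly" where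
  "rnO1 a b c d = [:2,1:]*[:2,a+1:]*[:1,d-b:]"


definition rnO1s :: "real \<Rightarrow> real \<Rightarrow> real \<Rightarrow> real \<Rightarrow> real poly" where
  "rnO1s a b c d = [:2,(1)+2:]*[:2,(a+1)+2:]*[:1,(d-b)+1:]"


definition pdO1 :: "real \<Rightarrow> real \<Rightarrow> real \<Rightarrow> real \<Rightarrow> real poly" where
  "pdO1 a b c d = [:c+1,3:]*[:d,3:]*[:d+1,3:]"


definition pdO1s :: "real \<Rightarrow> real \<Rightarrow> real \<Rightarrow> real \<Rightarrow> real poly" where
  "pdO1s a b c d = [:(c+1)+3,3:]*[:(d)+3,3:]*[:(d+1)+3,3:]"


definition rdO1 :: "real \<Rightarrow> real \<Rightarrow> real \<Rightarrow> real \<Rightarrow> real poly" where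
  "rdO1 a b c d = [:3,c+1:]*[:3,d:]*[:3,d+1:]"


definition rdO1s :: "real \<Rightarrow> real \<Rightarrow> real \<Rightarrow> real \<Rightarrow> real poly" where
  "rdO1s a b c d = [:3,(c+1)+3:]*[:3,(d)+3:]*[:3,(d+1)+3:]"


definition pnO2 :: "real \<Rightarrow> real \<Rightarrow> real \<Rightarrow> real \<Rightarrow> real poly" where
  "pnO2 a b c d = [:a+1,2:]*[:b+1,2:]*[:c,1:]"


definition pnO2s :: "real \<Rightarrow> real \<Rightarrow> real \<Rightarrow> real \<Rightarrow> real poly" where
  "pnO2s a b c d = [:(a+1)+2,2:]*[:(b+1)+2,2:]*[:(c)+1,1:]"


definition rnO2 :: "real \<Rightarrow> real \<Rightarrow> real \<Rightarrow> real \<Rightarrow> real poly" where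
  "rnO2 a b c d = [:2,a+1:]*[:2,b+1:]*[:1,c:]"


definition rnO2s :: "real \<Rightarrow> real \<Rightarrow> real \<Rightarrow> real \<Rightarrow> real poly" where
  "rnO2s a b c d = [:2,(a+1)+2:]*[:2,(b+1)+2:]*[:1,(c)+1:]"


definition pdO2 :: "real \<Rightarrow> real \<Rightarrow> real \<Rightarrow> real \<Rightarrow> real poly" where
  "pdO2 a b c d = [:c+1,3:]*[:c+2,3:]*[:d+1,3:]"


definition pdO2s :: "real \<Rightarrow> real \<Rightarrow> real \<Rightarrow> real \<Rightarrow> real poly" where
  "pdO2s a b c d = [:(c+1)+3,3:]*[:(c+2)+3,3:]*[:(d+1)+3,3:]"


definition rdO2 :: "real \<Rightarrow> real \<Rightarrow> real \<Rightarrow> real \<Rightarrow> real poly" where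
  "rdO2 a b c d = [:3,c+1:]*[:3,c+2:]*[:3,d+1:]"


definition rdO2s :: "real \<Rightarrow> real \<Rightarrow> real \<Rightarrow> real \<Rightarrow> real poly" where
  "rdO2s a b c d = [:3,(c+1)+3:]*[:3,(c+2)+3:]*[:3,(d+1)+3:]"


definition PBE :: "real \<Rightarrow> real \<Rightarrow> real \<Rightarrow> real \<Rightarrow> real poly" where
  "PBE a b c d = pnE0 a b c d * pdE1 a b c d * pdE2 a b c d + pnE1 a b c d * pdE0 a b c d * pdE2 a b c d + pnE2 a b c d * pdE0 a b c d * pdE1 a b c d - smult (4/9) (pdE0 a b c d * pdE1 a b c d * pdE2 a b c d)"


definition PBO :: "real \<Rightarrow> real \<Rightarrow> real \<Rightarrow> real \<Rightarrow> real poly" where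
  "PBO a b c d = pnO0 a b c d * pdO1 a b c d * pdO2 a b c d + pnO1 a b c d * pdO0 a b c d * pdO2 a b c d + pnO2 a b c d * pdO0 a b c d * pdO1 a b c d - smult (4/9) (pdO0 a b c d * pdO1 a b c d * pdO2 a b c d)"


definition PAE :: "real \<Rightarrow> real \<Rightarrow> real \<Rightarrow> real \<Rightarrow> real poly" where
  "PAE a b c d = (pnE1 a b c d * pdE2 a b c d + pnE2 a b c d * pdE1 a b c d) * pnO0 a b c d * pdO1 a b c d + pnE2 a b c d * pnO1 a b c d * pdE1 a b c d * pdO0 a b c d - smult (16/243) (pdE1 a b c d * pdE2 a b c d * pdO0 a b c d * pdO1 a b c d)"


definition PAO :: "real \<Rightarrow> real \<Rightarrow> real \<Rightarrow> real \<Rightarrow> real poly" where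
  "PAO a b c d = (pnO1 a b c d * pdO2 a b c d + pnO2 a b c d * pdO1 a b c d) * pnE0s a b c d * pdE1s a b c d + pnO2 a b c d * pnE1s a b c d * pdO1 a b c d * pdE0s a b c d - smult (16/243) (pdO1 a b c d * pdO2 a b c d * pdE0s a b c d * pdE1s a b c d)"


definition PGE :: "real \<Rightarrow> real \<Rightarrow> real \<Rightarrow> real \<Rightarrow> real poly" where
  "PGE a b c d = pnE2 a b c d * pnO1 a b c d * pnE0s a b c d - smult (64/19683) (pdE2 a b c d * pdO1 a b c d * pdE0s a b c d)"


definition PGO :: "real \<Rightarrow> real \<Rightarrow> real \<Rightarrow> real \<Rightarrow> real poly" where
  "PGO a b c d = pnO2 a b c d * pnE1s a b c d * pnO0s a b c d - smult (64/19683) (pdO2 a b c d * pdE1s a b c d * pdO0s a b c d)"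


definition RBE :: "real \<Rightarrow> real \<Rightarrow> real \<Rightarrow> real \<Rightarrow> real poly" where
  "RBE a b c d = rnE0 a b c d * rdE1 a b c d * rdE2 a b c d + rnE1 a b c d * rdE0 a b c d * rdE2 a b c d + rnE2 a b c d * rdE0 a b c d * rdE1 a b c d - smult (4/9) (rdE0 a b c d * rdE1 a b c d * rdE2 a b c d)"


definition RGE :: "real \<Rightarrow> real \<Rightarrow> real \<Rightarrow> real \<Rightarrow> real poly" where
  "RGE a b c d = rnE2 a b c d * rnO1 a b c d * rnE0s a b c d - smult (64/19683) (rdE2 a b c d * rdO1 a b c d * rdE0s a b c d)"


definition Good :: "real \<Rightarrow> real \<Rightarrow> real \<Rightarrow> real \<Rightarrow> bool" where
  "Good a b c d \<longleftrightarrow> (\<forall>n::nat. n \<ge> 1 \<longrightarrow>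
            beta_rc a b c d n = 3 * (4/27) \<and>
            alpha_rc a b c d (n+1) = 3 * (4/27)^2 \<and>
            gamma_rc a b c d (n+1) = (4/27)^3)"


schematic_goal main13_aux: "(\<forall>a b c d :: real. 0 < a \<longrightarrow> 0 < b \<longrightarrow> 0 < c \<longrightarrow> 0 < d \<longrightarrow> ((\<forall>n::nat. n \<ge> 1 \<longrightarrow>
            beta_rc a b c d n = 3 * (4/27) \<and>
            alpha_rc a b c d (n+1) = 3 * (4/27)^2 \<and>
            gamma_rc a b c d (n+1) = (4/27)^3)
     \<longleftrightarrow> (a, b, c, d) \<in> {(1/3, 2/3, 1/2, 1), (2/3, 1/3, 1/2, 1),
                         (1/3, 2/3, 1, 3/2), (2/3, 1/3, 1, 3/2),
                         (2/3, 4/3, 1, 3/2), (4/3, 2/3, 1, 3/2),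
                         (2/3, 4/3, 3/2, 2), (4/3, 2/3, 3/2, 2),
                         (4/3, 5/3, 3/2, 2), (5/3, 4/3, 3/2, 2),
                         (4/3, 5/3, 2, 5/2), (5/3, 4/3, 2, 5/2)})) \<and> (?u::bool) = ?u"
proof -
  have cseq_even: "cseq c d (2*j) = d + of_int j"
      for c d j
   unfolding cseq_def by simp

  have cseq_odd: "cseq c d (2*j+1) = c + of_int j + 1"
      for c d j
  proof -
    have "(2*j+2) div 2 = j + 1" by simp
    then show ?thesis unfolding cseq_def by (simp add: add.assoc)
  qed


  have cE: "cseq c d (int (2*k)) = d + real k" "cseq c d (int (2*k) - 1) = c + real k"
      for c d k
    using cseq_even[of c d "int k"] cseq_odd[of c d "int k - 1"] by simp_all

  have cO: "cseq c d (int (2*k+1)) = c + real k + 1" "cseq c d (int (2*k+1) - 1) = d + real k"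
      for c d k
    using cseq_even[of c d "int k"] cseq_odd[of c d "int k"] by (simp_all add: add.commute)


  have lamE0: "lam a b c d (6*k) = nE0 a b c d (real k) / dE0 a b c d (real k)"
      if "k \<ge> 1"
      for a b c d k
  proof -
    have m: "(6*k) div 3 = 2*k" "(6*k) mod 3 = 0" by presburger+
    show ?thesis using that unfolding lam_def Let_def m cE nE0_def dE0_def by (simp add: algebra_simps)
  qed

  have lamE1: "lam a b c d (6*k+1) = nE1 a b c d (real k) / dE1 a b c d (real k)"
      if "k \<ge> 1"
      for a b c d k
  proof -
    have m: "(6*k+1) div 3 = 2*k" "(6*k+1) mod 3 = 1" by presburger+
    show ?thesis using that unfolding lam_def Let_def m cE nE1_def dE1_def by (simp add: algebra_simps)
  qed

  have lamE2: "lam a b c d (6*k+2) = nE2 a b c d (real k) / dE2 a b c d (real k)"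
      for a b c d k
  proof -
    have m: "(6*k+2) div 3 = 2*k" "(6*k+2) mod 3 = 2" by presburger+
    show ?thesis unfolding lam_def Let_def m cE nE2_def dE2_def by (simp add: algebra_simps)
  qed

  have lamO0: "lam a b c d (6*k+3) = nO0 a b c d (real k) / dO0 a b c d (real k)"
      for a b c d k
  proof -
    have m: "(6*k+3) div 3 = 2*k+1" "(6*k+3) mod 3 = 0" by presburger+
    show ?thesis unfolding lam_def Let_def m cO nO0_def dO0_def by (simp add: algebra_simps)
  qed

  have lamO1: "lam a b c d (6*k+4) = nO1 a b c d (real k) / dO1 a b c d (real k)"
      for a b c d k
  proof -
    have m: "(6*k+4) div 3 = 2*k+1" "(6*k+4) mod 3 = 1" by presburger+
    show ?thesis unfolding lam_def Let_def m cO nO1_def dO1_def by (simp add: algebra_simps)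
  qed

  have lamO2: "lam a b c d (6*k+5) = nO2 a b c d (real k) / dO2 a b c d (real k)"
      for a b c d k
  proof -
    have m: "(6*k+5) div 3 = 2*k+1" "(6*k+5) mod 3 = 2" by presburger+
    show ?thesis unfolding lam_def Let_def m cO nO2_def dO2_def by (simp add: algebra_simps)
  qed


  have lamE0s: "lam a b c d (6*k+6) = nE0 a b c d (real k + 1) / dE0 a b c d (real k + 1)"
      for a b c d k
    using lamE0[of "k+1" a b c d] by (simp add: algebra_simps)

  have lamE1s: "lam a b c d (6*k+7) = nE1 a b c d (real k + 1) / dE1 a b c d (real k + 1)"
      for a b c d k
    using lamE1[of "k+1" a b c d] by (simp add: algebra_simps)

  have lamO0s: "lam a b c d (6*k+9) = nO0 a b c d (real k + 1) / dO0 a b c d (real k + 1)"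
      for a b c d k
    using lamO0[of a b c d "k+1"] by (simp add: algebra_simps)


  have beta_E: "beta_rc a b c d (2*k) =
     nE0 a b c d (real k) / dE0 a b c d (real k) + nE1 a b c d (real k) / dE1 a b c d (real k)
     + nE2 a b c d (real k) / dE2 a b c d (real k)"
      if "k \<ge> 1"
      for a b c d k
  proof -
    have l0: "lam a b c d (3*(2*k)) = lam a b c d (6*k)" by (rule arg_cong[where f="lam a b c d"]) simp
    have l1: "lam a b c d (3*(2*k)+1) = lam a b c d (6*k+1)" by (rule arg_cong[where f="lam a b c d"]) simp
    have l2: "lam a b c d (3*(2*k)+2) = lam a b c d (6*k+2)" by (rule arg_cong[where f="lam a b c d"]) simp
    show ?thesis unfolding beta_rc_def l0 l1 l2 lamE0[OF that] lamE1[OF that] lamE2 ..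
  qed


  have beta_O: "beta_rc a b c d (2*k+1) =
     nO0 a b c d (real k) / dO0 a b c d (real k) + nO1 a b c d (real k) / dO1 a b c d (real k)
     + nO2 a b c d (real k) / dO2 a b c d (real k)"
      for a b c d k
  proof -
    have l0: "lam a b c d (3*(2*k+1)) = lam a b c d (6*k+3)" by (rule arg_cong[where f="lam a b c d"]) simp
    have l1: "lam a b c d (3*(2*k+1)+1) = lam a b c d (6*k+4)" by (rule arg_cong[where f="lam a b c d"]) simp
    have l2: "lam a b c d (3*(2*k+1)+2) = lam a b c d (6*k+5)" by (rule arg_cong[where f="lam a b c d"]) simp
    show ?thesis unfolding beta_rc_def l0 l1 l2 lamO0 lamO1 lamO2 ..
  qed


  have alpha_E: "alpha_rc a b c d (2*k+1) =
     (nE1 a b c d (real k) / dE1 a b c d (real k) + nE2 a b c d (real k) / dE2 a b c d (real k))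
       * (nO0 a b c d (real k) / dO0 a b c d (real k))
     + nE2 a b c d (real k) / dE2 a b c d (real k) * (nO1 a b c d (real k) / dO1 a b c d (real k))"
      if "k \<ge> 1"
      for a b c d k
  proof -
    have l0: "lam a b c d (3*(2*k+1-1)+1) = lam a b c d (6*k+1)" by (rule arg_cong[where f="lam a b c d"]) simp
    have l1: "lam a b c d (3*(2*k+1-1)+2) = lam a b c d (6*k+2)" by (rule arg_cong[where f="lam a b c d"]) simp
    have l2: "lam a b c d (3*(2*k+1-1)+3) = lam a b c d (6*k+3)" by (rule arg_cong[where f="lam a b c d"]) simp
    have l3: "lam a b c d (3*(2*k+1-1)+4) = lam a b c d (6*k+4)" by (rule arg_cong[where f="lam a b c d"]) simp
    show ?thesis unfolding alpha_rc_def l0 l1 l2 l3 lamE1[OF that] lamE2 lamO0 lamO1 ..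
  qed


  have alpha_O: "alpha_rc a b c d (2*k+2) =
     (nO1 a b c d (real k) / dO1 a b c d (real k) + nO2 a b c d (real k) / dO2 a b c d (real k))
       * (nE0 a b c d (real k + 1) / dE0 a b c d (real k + 1))
     + nO2 a b c d (real k) / dO2 a b c d (real k) * (nE1 a b c d (real k + 1) / dE1 a b c d (real k + 1))"
      for a b c d k
  proof -
    have l0: "lam a b c d (3*(2*k+2-1)+1) = lam a b c d (6*k+4)" by (rule arg_cong[where f="lam a b c d"]) simp
    have l1: "lam a b c d (3*(2*k+2-1)+2) = lam a b c d (6*k+5)" by (rule arg_cong[where f="lam a b c d"]) simp
    have l2: "lam a b c d (3*(2*k+2-1)+3) = lam a b c d (6*k+6)" by (rule arg_cong[where f="lam a b c d"]) simp
    have l3: "lam a b c d (3*(2*k+2-1)+4) = lam a b c d (6*k+7)" by (rule arg_cong[where f="lam a b c d"]) simp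
    show ?thesis unfolding alpha_rc_def l0 l1 l2 l3 lamO1 lamO2 lamE0s lamE1s ..
  qed


  have gamma_E: "gamma_rc a b c d (2*k+1) =
     nE2 a b c d (real k) / dE2 a b c d (real k) * (nO1 a b c d (real k) / dO1 a b c d (real k))
     * (nE0 a b c d (real k + 1) / dE0 a b c d (real k + 1))"
      for a b c d k
  proof -
    have l0: "lam a b c d (3*(2*k+1-1)+2) = lam a b c d (6*k+2)" by (rule arg_cong[where f="lam a b c d"]) simp
    have l1: "lam a b c d (3*(2*k+1-1)+4) = lam a b c d (6*k+4)" by (rule arg_cong[where f="lam a b c d"]) simp
    have l2: "lam a b c d (3*(2*k+1-1)+6) = lam a b c d (6*k+6)" by (rule arg_cong[where f="lam a b c d"]) simp
    show ?thesis unfolding gamma_rc_def l0 l1 l2 lamE2 lamO1 lamE0s ..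
  qed


  have gamma_O: "gamma_rc a b c d (2*k+2) =
     nO2 a b c d (real k) / dO2 a b c d (real k) * (nE1 a b c d (real k + 1) / dE1 a b c d (real k + 1))
     * (nO0 a b c d (real k + 1) / dO0 a b c d (real k + 1))"
      for a b c d k
  proof -
    have l0: "lam a b c d (3*(2*k+2-1)+2) = lam a b c d (6*k+5)" by (rule arg_cong[where f="lam a b c d"]) simp
    have l1: "lam a b c d (3*(2*k+2-1)+4) = lam a b c d (6*k+7)" by (rule arg_cong[where f="lam a b c d"]) simp
    have l2: "lam a b c d (3*(2*k+2-1)+6) = lam a b c d (6*k+9)" by (rule arg_cong[where f="lam a b c d"]) simp
    show ?thesis unfolding gamma_rc_def l0 l1 l2 lamO2 lamE1s lamO0s ..
  qed


  note Ndefs = NBE_def NBO_def NAE_def NAO_def NGE_def NGO_def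
    nE0_def nE1_def nE2_def nO0_def nO1_def nO2_def dE0_def dE1_def dE2_def dO0_def dO1_def dO2_def


  have poly_pnE0 [simp]: "poly (pnE0 a b c d) x = nE0 a b c d x"
      for a b c d x
    by (simp add: pnE0_def nE0_def algebra_simps)


  have poly_pnE0s [simp]: "poly (pnE0s a b c d) x = nE0 a b c d (x+1)"
      for a b c d x
    by (simp add: pnE0s_def nE0_def algebra_simps)


  have poly_rnE0: "x \<noteq> 0 \<Longrightarrow> poly (rnE0 a b c d) (1/x) = nE0 a b c d x / x^3"
      for a b c d x
    by (simp add: rnE0_def nE0_def field_simps power3_eq_cube algebra_simps)


  have poly_rnE0s: "x \<noteq> 0 \<Longrightarrow> poly (rnE0s a b c d) (1/x) = nE0 a b c d (x+1) / x^3"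
      for a b c d x
    by (simp add: rnE0s_def nE0_def field_simps power3_eq_cube algebra_simps)


  have poly_pdE0 [simp]: "poly (pdE0 a b c d) x = dE0 a b c d x"
      for a b c d x
    by (simp add: pdE0_def dE0_def algebra_simps)


  have poly_pdE0s [simp]: "poly (pdE0s a b c d) x = dE0 a b c d (x+1)"
      for a b c d x
    by (simp add: pdE0s_def dE0_def algebra_simps)


  have poly_rdE0: "x \<noteq> 0 \<Longrightarrow> poly (rdE0 a b c d) (1/x) = dE0 a b c d x / x^3"
      for a b c d x
    by (simp add: rdE0_def dE0_def field_simps power3_eq_cube algebra_simps)


  have poly_rdE0s: "x \<noteq> 0 \<Longrightarrow> poly (rdE0s a b c d) (1/x) = dE0 a b c d (x+1) / x^3"
      for a b c d x
    by (simp add: rdE0s_def dE0_def field_simps power3_eq_cube algebra_simps)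


  have poly_pnE1 [simp]: "poly (pnE1 a b c d) x = nE1 a b c d x"
      for a b c d x
    by (simp add: pnE1_def nE1_def algebra_simps)


  have poly_pnE1s [simp]: "poly (pnE1s a b c d) x = nE1 a b c d (x+1)"
      for a b c d x
    by (simp add: pnE1s_def nE1_def algebra_simps)


  have poly_rnE1: "x \<noteq> 0 \<Longrightarrow> poly (rnE1 a b c d) (1/x) = nE1 a b c d x / x^3"
      for a b c d x
    by (simp add: rnE1_def nE1_def field_simps power3_eq_cube algebra_simps)


  have poly_rnE1s: "x \<noteq> 0 \<Longrightarrow> poly (rnE1s a b c d) (1/x) = nE1 a b c d (x+1) / x^3"
      for a b c d x
    by (simp add: rnE1s_def nE1_def field_simps power3_eq_cube algebra_simps)


  have poly_pdE1 [simp]: "poly (pdE1 a b c d) x = dE1 a b c d x"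
      for a b c d x
    by (simp add: pdE1_def dE1_def algebra_simps)


  have poly_pdE1s [simp]: "poly (pdE1s a b c d) x = dE1 a b c d (x+1)"
      for a b c d x
    by (simp add: pdE1s_def dE1_def algebra_simps)


  have poly_rdE1: "x \<noteq> 0 \<Longrightarrow> poly (rdE1 a b c d) (1/x) = dE1 a b c d x / x^3"
      for a b c d x
    by (simp add: rdE1_def dE1_def field_simps power3_eq_cube algebra_simps)


  have poly_rdE1s: "x \<noteq> 0 \<Longrightarrow> poly (rdE1s a b c d) (1/x) = dE1 a b c d (x+1) / x^3"
      for a b c d x
    by (simp add: rdE1s_def dE1_def field_simps power3_eq_cube algebra_simps)


  have poly_pnE2 [simp]: "poly (pnE2 a b c d) x = nE2 a b c d x"
      for a b c d x
    by (simp add: pnE2_def nE2_def algebra_simps)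


  have poly_pnE2s [simp]: "poly (pnE2s a b c d) x = nE2 a b c d (x+1)"
      for a b c d x
    by (simp add: pnE2s_def nE2_def algebra_simps)


  have poly_rnE2: "x \<noteq> 0 \<Longrightarrow> poly (rnE2 a b c d) (1/x) = nE2 a b c d x / x^3"
      for a b c d x
    by (simp add: rnE2_def nE2_def field_simps power3_eq_cube algebra_simps)


  have poly_rnE2s: "x \<noteq> 0 \<Longrightarrow> poly (rnE2s a b c d) (1/x) = nE2 a b c d (x+1) / x^3"
      for a b c d x
    by (simp add: rnE2s_def nE2_def field_simps power3_eq_cube algebra_simps)


  have poly_pdE2 [simp]: "poly (pdE2 a b c d) x = dE2 a b c d x"
      for a b c d x
    by (simp add: pdE2_def dE2_def algebra_simps)


  have poly_pdE2s [simp]: "poly (pdE2s a b c d) x = dE2 a b c d (x+1)"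
      for a b c d x
    by (simp add: pdE2s_def dE2_def algebra_simps)


  have poly_rdE2: "x \<noteq> 0 \<Longrightarrow> poly (rdE2 a b c d) (1/x) = dE2 a b c d x / x^3"
      for a b c d x
    by (simp add: rdE2_def dE2_def field_simps power3_eq_cube algebra_simps)


  have poly_rdE2s: "x \<noteq> 0 \<Longrightarrow> poly (rdE2s a b c d) (1/x) = dE2 a b c d (x+1) / x^3"
      for a b c d x
    by (simp add: rdE2s_def dE2_def field_simps power3_eq_cube algebra_simps)


  have poly_pnO0 [simp]: "poly (pnO0 a b c d) x = nO0 a b c d x"
      for a b c d x
    by (simp add: pnO0_def nO0_def algebra_simps)


  have poly_pnO0s [simp]: "poly (pnO0s a b c d) x = nO0 a b c d (x+1)"
      for a b c d x
    by (simp add: pnO0s_def nO0_def algebra_simps)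


  have poly_rnO0: "x \<noteq> 0 \<Longrightarrow> poly (rnO0 a b c d) (1/x) = nO0 a b c d x / x^3"
      for a b c d x
    by (simp add: rnO0_def nO0_def field_simps power3_eq_cube algebra_simps)


  have poly_rnO0s: "x \<noteq> 0 \<Longrightarrow> poly (rnO0s a b c d) (1/x) = nO0 a b c d (x+1) / x^3"
      for a b c d x
    by (simp add: rnO0s_def nO0_def field_simps power3_eq_cube algebra_simps)


  have poly_pdO0 [simp]: "poly (pdO0 a b c d) x = dO0 a b c d x"
      for a b c d x
    by (simp add: pdO0_def dO0_def algebra_simps)


  have poly_pdO0s [simp]: "poly (pdO0s a b c d) x = dO0 a b c d (x+1)"
      for a b c d x
    by (simp add: pdO0s_def dO0_def algebra_simps)


  have poly_rdO0: "x \<noteq> 0 \<Longrightarrow> poly (rdO0 a b c d) (1/x) = dO0 a b c d x / x^3"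
      for a b c d x
    by (simp add: rdO0_def dO0_def field_simps power3_eq_cube algebra_simps)


  have poly_rdO0s: "x \<noteq> 0 \<Longrightarrow> poly (rdO0s a b c d) (1/x) = dO0 a b c d (x+1) / x^3"
      for a b c d x
    by (simp add: rdO0s_def dO0_def field_simps power3_eq_cube algebra_simps)


  have poly_pnO1 [simp]: "poly (pnO1 a b c d) x = nO1 a b c d x"
      for a b c d x
    by (simp add: pnO1_def nO1_def algebra_simps)


  have poly_pnO1s [simp]: "poly (pnO1s a b c d) x = nO1 a b c d (x+1)"
      for a b c d x
    by (simp add: pnO1s_def nO1_def algebra_simps)


  have poly_rnO1: "x \<noteq> 0 \<Longrightarrow> poly (rnO1 a b c d) (1/x) = nO1 a b c d x / x^3"
      for a b c d x
    by (simp add: rnO1_def nO1_def field_simps power3_eq_cube algebra_simps)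


  have poly_rnO1s: "x \<noteq> 0 \<Longrightarrow> poly (rnO1s a b c d) (1/x) = nO1 a b c d (x+1) / x^3"
      for a b c d x
    by (simp add: rnO1s_def nO1_def field_simps power3_eq_cube algebra_simps)


  have poly_pdO1 [simp]: "poly (pdO1 a b c d) x = dO1 a b c d x"
      for a b c d x
    by (simp add: pdO1_def dO1_def algebra_simps)


  have poly_pdO1s [simp]: "poly (pdO1s a b c d) x = dO1 a b c d (x+1)"
      for a b c d x
    by (simp add: pdO1s_def dO1_def algebra_simps)


  have poly_rdO1: "x \<noteq> 0 \<Longrightarrow> poly (rdO1 a b c d) (1/x) = dO1 a b c d x / x^3"
      for a b c d x
    by (simp add: rdO1_def dO1_def field_simps power3_eq_cube algebra_simps)


  have poly_rdO1s: "x \<noteq> 0 \<Longrightarrow> poly (rdO1s a b c d) (1/x) = dO1 a b c d (x+1) / x^3"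
      for a b c d x
    by (simp add: rdO1s_def dO1_def field_simps power3_eq_cube algebra_simps)


  have poly_pnO2 [simp]: "poly (pnO2 a b c d) x = nO2 a b c d x"
      for a b c d x
    by (simp add: pnO2_def nO2_def algebra_simps)


  have poly_pnO2s [simp]: "poly (pnO2s a b c d) x = nO2 a b c d (x+1)"
      for a b c d x
    by (simp add: pnO2s_def nO2_def algebra_simps)


  have poly_rnO2: "x \<noteq> 0 \<Longrightarrow> poly (rnO2 a b c d) (1/x) = nO2 a b c d x / x^3"
      for a b c d x
    by (simp add: rnO2_def nO2_def field_simps power3_eq_cube algebra_simps)


  have poly_rnO2s: "x \<noteq> 0 \<Longrightarrow> poly (rnO2s a b c d) (1/x) = nO2 a b c d (x+1) / x^3"
      for a b c d x
    by (simp add: rnO2s_def nO2_def field_simps power3_eq_cube algebra_simps)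


  have poly_pdO2 [simp]: "poly (pdO2 a b c d) x = dO2 a b c d x"
      for a b c d x
    by (simp add: pdO2_def dO2_def algebra_simps)


  have poly_pdO2s [simp]: "poly (pdO2s a b c d) x = dO2 a b c d (x+1)"
      for a b c d x
    by (simp add: pdO2s_def dO2_def algebra_simps)


  have poly_rdO2: "x \<noteq> 0 \<Longrightarrow> poly (rdO2 a b c d) (1/x) = dO2 a b c d x / x^3"
      for a b c d x
    by (simp add: rdO2_def dO2_def field_simps power3_eq_cube algebra_simps)


  have poly_rdO2s: "x \<noteq> 0 \<Longrightarrow> poly (rdO2s a b c d) (1/x) = dO2 a b c d (x+1) / x^3"
      for a b c d x
    by (simp add: rdO2s_def dO2_def field_simps power3_eq_cube algebra_simps)


  have poly_PBE: "poly (PBE a b c d) x = NBE a b c d x"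
      for a b c d x
    by (simp add: PBE_def NBE_def power2_eq_square power3_eq_cube)


  have poly_PBO: "poly (PBO a b c d) x = NBO a b c d x"
      for a b c d x
    by (simp add: PBO_def NBO_def power2_eq_square power3_eq_cube)


  have poly_PAE: "poly (PAE a b c d) x = NAE a b c d x"
      for a b c d x
    by (simp add: PAE_def NAE_def power2_eq_square power3_eq_cube)


  have poly_PAO: "poly (PAO a b c d) x = NAO a b c d x"
      for a b c d x
    by (simp add: PAO_def NAO_def power2_eq_square power3_eq_cube)


  have poly_PGE: "poly (PGE a b c d) x = NGE a b c d x"
      for a b c d x
    by (simp add: PGE_def NGE_def power2_eq_square power3_eq_cube)


  have poly_PGO: "poly (PGO a b c d) x = NGO a b c d x"
      for a b c d x
    by (simp add: PGO_def NGO_def power2_eq_square power3_eq_cube)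


  have poly_RBE: "poly (RBE a b c d) (1/x) = NBE a b c d x / x^9"
      if "x \<noteq> 0"
      for a b c d x
    using that by (simp add: RBE_def NBE_def poly_rnE0 poly_rnE1 poly_rnE2 poly_rnO1 poly_rnE0s poly_rdE0 poly_rdE1 poly_rdE2 poly_rdO1 poly_rdE0s field_simps power2_eq_square)


  have poly_RGE: "poly (RGE a b c d) (1/x) = NGE a b c d x / x^9"
      if "x \<noteq> 0"
      for a b c d x
    using that by (simp add: RGE_def NGE_def poly_rnE0 poly_rnE1 poly_rnE2 poly_rnO1 poly_rnE0s poly_rdE0 poly_rdE1 poly_rdE2 poly_rdO1 poly_rdE0s field_simps power2_eq_square)



  have poly_zero_inv_nat: "p = 0"
      if "\<forall>k::nat. k \<ge> 1 \<longrightarrow> poly p (1 / real k) = 0"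
      for p :: "real poly"
  proof (rule ccontr)
    assume "p \<noteq> 0"
    then have fin: "finite {x. poly p x = 0}" by (rule poly_roots_finite)
    have sub: "(\<lambda>k::nat. 1 / real k) ` {1..} \<subseteq> {x. poly p x = 0}" using that by auto
    have inj: "inj_on (\<lambda>k::nat. 1 / real k) {1..}" by (auto simp: inj_on_def)
    have "infinite {1::nat..}" by (simp add: infinite_Ici)
    then have "infinite ((\<lambda>k::nat. 1 / real k) ` {1..})" using inj finite_imageD by blast
    then show False using fin sub finite_subset by blast
  qed


  have cl3: "(N0/D0 + N1/D1 + N2/D2 = C) = (N0*D1*D2 + N1*D0*D2 + N2*D0*D1 - C*(D0*D1*D2) = 0)"
      if "D0 \<noteq> 0" "D1 \<noteq> 0" "D2 \<noteq> 0"
      for N0 N1 N2 D0 D1 D2 C :: real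
    using that by (simp add: field_simps)


  have cla: "((N1/D1 + N2/D2)*(N3/D3) + N2/D2*(N4/D4) = C) =
      ((N1*D2 + N2*D1)*N3*D4 + N2*N4*D1*D3 - C*(D1*D2*D3*D4) = 0)"
      if "D1 \<noteq> 0" "D2 \<noteq> 0" "D3 \<noteq> 0" "D4 \<noteq> 0"
      for N1 N2 N3 N4 D1 D2 D3 D4 C :: real
    using that by (simp add: field_simps)


  have clg: "(N1/D1*(N2/D2)*(N3/D3) = C) = (N1*N2*N3 - C*(D1*D2*D3) = 0)"
      if "D1 \<noteq> 0" "D2 \<noteq> 0" "D3 \<noteq> 0"
      for N1 N2 N3 D1 D2 D3 C :: real
    using that by (simp add: field_simps)



  have posE: "dE0 a b c d x > 0" "dE1 a b c d x > 0" "dE2 a b c d x > 0"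
      if pos: "a > 0" "b > 0" "c > 0" "d > 0" and "x \<ge> 1"
      for a b c d x :: real
    using pos that unfolding dE0_def dE1_def dE2_def by (intro mult_pos_pos; linarith)+


  have posO: "dO0 a b c d x > 0" "dO1 a b c d x > 0" "dO2 a b c d x > 0"
      if pos: "a > 0" "b > 0" "c > 0" "d > 0" and "x \<ge> 0"
      for a b c d x :: real
    using pos that unfolding dO0_def dO1_def dO2_def by (intro mult_pos_pos; linarith)+


  have suff: "\<forall>n::nat. n \<ge> 1 \<longrightarrow>
              beta_rc a b c d n = 3 * (4/27) \<and>
              alpha_rc a b c d (n+1) = 3 * (4/27)^2 \<and>
              gamma_rc a b c d (n+1) = (4/27)^3"
      if pos: "a > 0" "b > 0" "c > 0" "d > 0" and ZBE: "\<And>x. NBE a b c d x = 0" and ZBO: "\<And>x. NBO a b c d x = 0"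
      and ZAE: "\<And>x. NAE a b c d x = 0" and ZAO: "\<And>x. NAO a b c d x = 0"
      and ZGE: "\<And>x. NGE a b c d x = 0" and ZGO: "\<And>x. NGO a b c d x = 0"
      for a b c d :: real
  proof (intro allI impI)
    fix n :: nat
    assume n1: "n \<ge> 1"
    obtain k where k: "n = 2*k \<or> n = 2*k+1" by (metis oddE evenE)
    show "beta_rc a b c d n = 3 * (4/27) \<and>
              alpha_rc a b c d (n+1) = 3 * (4/27)^2 \<and>
              gamma_rc a b c d (n+1) = (4/27)^3"
    proof (cases "n = 2*k")
      case True
      then have k1: "k \<ge> 1" using n1 by simp
      have x1: "real k \<ge> 1" using k1 by simp
      have x0: "real k + 1 \<ge> 1" by simp
      have x0': "real k \<ge> 0" by simp
      note E = posE[OF pos x1] and E1 = posE[OF pos x0] and O = posO[OF pos x0']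
      have "beta_rc a b c d (2*k) = 3 * (4/27)"
        unfolding beta_E[OF k1] using E ZBE[of "real k"] unfolding NBE_def
        by (subst cl3) auto
      moreover have "alpha_rc a b c d (2*k+1) = 3 * (4/27)^2"
        unfolding alpha_E[OF k1] using E O ZAE[of "real k"] unfolding NAE_def
        by (subst cla) auto
      moreover have "gamma_rc a b c d (2*k+1) = (4/27)^3"
        unfolding gamma_E using E E1 O ZGE[of "real k"] unfolding NGE_def
        by (subst clg) auto
      ultimately show ?thesis using True by simp
    next
      case False
      then have nk: "n = 2*k+1" using k by simp
      have x0: "real k + 1 \<ge> 1" by simp
      have x0': "real k \<ge> 0" by simp
      note E1 = posE[OF pos x0] and O = posO[OF pos x0'] and O1 = posO[OF pos, of "real k + 1"]
      have "beta_rc a b c d (2*k+1) = 3 * (4/27)"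
        unfolding beta_O using O ZBO[of "real k"] unfolding NBO_def
        by (subst cl3) auto
      moreover have "alpha_rc a b c d (2*k+2) = 3 * (4/27)^2"
        unfolding alpha_O using E1 O ZAO[of "real k"] unfolding NAO_def
        by (subst cla) auto
      moreover have "gamma_rc a b c d (2*k+2) = (4/27)^3"
        unfolding gamma_O using E1 O O1 ZGO[of "real k"] unfolding NGO_def
        by (subst clg) auto
      moreover have "n + 1 = 2*k+2" using nk by simp
      ultimately show ?thesis using nk by simp
    qed
  qed


  have nec_poly: "RBE a b c d = 0" "RGE a b c d = 0"
      if pos: "a > 0" "b > 0" "c > 0" "d > 0" and H: "\<forall>n::nat. n \<ge> 1 \<longrightarrow>
              beta_rc a b c d n = 3 * (4/27) \<and>
              alpha_rc a b c d (n+1) = 3 * (4/27)^2 \<and>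
              gamma_rc a b c d (n+1) = (4/27)^3"
      for a b c d :: real
  proof -
    have "\<forall>k::nat. k \<ge> 1 \<longrightarrow> poly (RBE a b c d) (1 / real k) = 0"
    proof (intro allI impI)
      fix k :: nat assume k1: "k \<ge> 1"
      have x1: "real k \<ge> 1" using k1 by simp
      note E = posE[OF pos x1]
      have "beta_rc a b c d (2*k) = 3 * (4/27)" using H[rule_format, of "2*k"] k1 by simp
      then have "NBE a b c d (real k) = 0"
        unfolding beta_E[OF k1] NBE_def using E by (subst (asm) cl3) auto
      moreover have "real k \<noteq> 0" using k1 by simp
      ultimately show "poly (RBE a b c d) (1 / real k) = 0" by (simp add: poly_RBE)
    qed
    then show "RBE a b c d = 0" by (rule poly_zero_inv_nat)
    have "\<forall>k::nat. k \<ge> 1 \<longrightarrow> poly (RGE a b c d) (1 / real k) = 0"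
    proof (intro allI impI)
      fix k :: nat assume k1: "k \<ge> 1"
      have x1: "real k \<ge> 1" using k1 by simp
      have x0: "real k + 1 \<ge> 1" by simp
      have x0': "real k \<ge> 0" by simp
      note E = posE[OF pos x1] and E1 = posE[OF pos x0] and O = posO[OF pos x0']
      have "gamma_rc a b c d (2*k+1) = (4/27)^3" using H[rule_format, of "2*k"] k1 by simp
      then have "NGE a b c d (real k) = 0"
        unfolding gamma_E NGE_def using E E1 O by (subst (asm) clg) auto
      moreover have "real k \<noteq> 0" using k1 by simp
      ultimately show "poly (RGE a b c d) (1 / real k) = 0" by (simp add: poly_RGE)
    qed
    then show "RGE a b c d = 0" by (rule poly_zero_inv_nat)
  qed



  have lin3: "[:v1,u1:]*[:v2,u2:]*[:v3,u3:] = [:v1*v2*v3, u1*v2*v3+v1*u2*v3+v1*v2*u3, u1*u2*v3+u1*v2*u3+v1*u2*u3, u1*u2*(u3::real):]"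
      for u1 u2 u3 v1 v2 v3
    by (simp add: algebra_simps)


  have cubic_mult1: "coeff ([:a0,a1,a2,a3:] * [:b0,b1,b2,b3:] * [:c0,c1,c2,c3:]) 1 =
    (a0*b0*c1 + a0*b1*c0 + a1*b0*(c0::real))"
      for a0 a1 a2 a3 b0 b1 b2 b3 c0 c1 c2 c3
    by (simp add: coeff_mult eval_nat_numeral atMost_Suc algebra_simps)

  have cubic_mult2: "coeff ([:a0,a1,a2,a3:] * [:b0,b1,b2,b3:] * [:c0,c1,c2,c3:]) 2 =
    (a0*b0*c2 + a0*b1*c1 + a0*b2*c0 + a1*b0*c1 + a1*b1*c0 + a2*b0*(c0::real))"
      for a0 a1 a2 a3 b0 b1 b2 b3 c0 c1 c2 c3
    by (simp add: coeff_mult eval_nat_numeral atMost_Suc algebra_simps)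

  have cubic_mult3: "coeff ([:a0,a1,a2,a3:] * [:b0,b1,b2,b3:] * [:c0,c1,c2,c3:]) 3 =
    (a0*b0*c3 + a0*b1*c2 + a0*b2*c1 + a0*b3*c0 + a1*b0*c2 + a1*b1*c1 + a1*b2*c0 + a2*b0*c1 + a2*b1*c0 + a3*b0*(c0::real))"
      for a0 a1 a2 a3 b0 b1 b2 b3 c0 c1 c2 c3
    by (simp add: coeff_mult eval_nat_numeral atMost_Suc algebra_simps)


  have rnE0': "rnE0 a b c d = [:2,0:]*[:2,b-1:]*[:1,d-a-1:]"
      for a b c d
   by (simp add: rnE0_def)

  have rnE1': "rnE1 a b c d = [:2,0:]*[:2,a:]*[:1,c-b:]"
      for a b c d
   by (simp add: rnE1_def)


  note cdefs = RBE_def RGE_def rnE0' rnE1' rnE2_def rnO1_def rnE0s_def rdE0_def rdE1_def rdE2_def rdO1_def rdE0s_def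


  have cb8: "coeff (RBE a b c d) 1 = (-972*c + 972*d - 486)"
      for a b c d
    unfolding cdefs lin3 coeff_diff coeff_add coeff_smult cubic_mult1
    by (simp add: algebra_simps power2_eq_square power3_eq_cube)


  have cb7: "coeff (RBE a b c d) 2 = (-2187*a*b + 972*a*c + 1944*a*d - 2430*a + 972*b*c + 1944*b*d - 2430*b - 1620*c^2 - 1296*c*d + 2430*c - 324*d + 648)"
      for a b c d
    unfolding cdefs lin3 coeff_diff coeff_add coeff_smult cubic_mult2
    by (simp add: algebra_simps power2_eq_square power3_eq_cube)


  have cb6: "coeff (RBE a b c d) 3 = (-1701*a*b*c - 1944*a*b*d + 1701*a*b + 648*a*c^2 + 3240*a*c*d - 3888*a*c + 1944*a*d^2 - 5508*a*d + 4212*a + 648*b*c^2 + 3240*b*c*d - 3888*b*c + 1944*b*d^2 - 5508*b*d + 4212*b - 756*c^3 - 2808*c^2*d + 3618*c^2 - 1944*c*d^2 + 5076*c*d - 2862*c - 648*d^3 + 1944*d^2 - 1458*d - 324)"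
      for a b c d
    unfolding cdefs lin3 coeff_diff coeff_add coeff_smult cubic_mult3
    by (simp add: algebra_simps power2_eq_square power3_eq_cube)


  have cg7: "coeff (RGE a b c d) 2 = (-48*a^2 + 64*a*d - 16*a - 48*b^2 + 64*b*d - 16*b - 64/3*c^2 - 128*c*d - 320/3*c + 256/3*d^2 + 352/3*d - 304/3)"
      for a b c d
    unfolding cdefs lin3 coeff_diff coeff_add coeff_smult cubic_mult2
    by (simp add: algebra_simps power2_eq_square power3_eq_cube)


  have alg1: "d = c + 1/2 \<and> 9*a*b = (12*c-6)*(a+b) - 12*c^2+6*c+2 \<and>
      ((b = 2*c - a \<and> (2*c-1)*(c-1)*(2*c-3) = 0) \<or> (b = 2*c - 1 - a \<and> (c-1)*(2*c-3)*(c-2) = 0))"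
      if h8: "coeff (RBE a b c d) 1 = 0" and h7: "coeff (RBE a b c d) 2 = 0"
      and h6: "coeff (RBE a b c d) 3 = 0" and g7: "coeff (RGE a b c d) 2 = 0"
      for a b c d :: real
  proof -
    note h8 = h8[unfolded cb8] and h7 = h7[unfolded cb7] and h6 = h6[unfolded cb6] and g7 = g7[unfolded cg7]
    have d: "d = c + 1/2" using h8 by simp
    have p: "9*a*b = (12*c-6)*(a+b) - 12*c^2+6*c+2" using h7 unfolding d by algebra
    have s: "(a+b-2*c)*(a+b-2*c+1) = 0" using g7 p unfolding d by algebra
    show ?thesis
    proof (cases "a+b-2*c = 0")
      case True
      then have b: "b = 2*c - a" by simp
      have "(2*c-1)*(c-1)*(2*c-3) = 0" using h6 p unfolding d b by algebra
      then show ?thesis using d p b by simp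
    next
      case False
      then have b: "b = 2*c - 1 - a" using s by simp
      have "(c-1)*(2*c-3)*(c-2) = 0" using h6 p unfolding d b by algebra
      then show ?thesis using d p b by simp
    qed
  qed


  have final: "(a, b, c, d) \<in> {(1/3, 2/3, 1/2, 1), (2/3, 1/3, 1/2, 1),
                           (1/3, 2/3, 1, 3/2), (2/3, 1/3, 1, 3/2),
                           (2/3, 4/3, 1, 3/2), (4/3, 2/3, 1, 3/2),
                           (2/3, 4/3, 3/2, 2), (4/3, 2/3, 3/2, 2),
                           (4/3, 5/3, 3/2, 2), (5/3, 4/3, 3/2, 2),
                           (4/3, 5/3, 2, 5/2), (5/3, 4/3, 2, 5/2)}"
      if d: "d = c + 1/2" and p: "9*a*b = (12*c-6)*(a+b) - 12*c^2+6*c+2"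
      and disj: "(b = 2*c - a \<and> (2*c-1)*(c-1)*(2*c-3) = 0) \<or> (b = 2*c - 1 - a \<and> (c-1)*(2*c-3)*(c-2) = 0)"
      for a b c d :: real
  proof -
    have c1: "(2*c-1)*(c-1)*(2*c-3) = 0 \<Longrightarrow> c = 1/2 \<or> c = 1 \<or> c = 3/2"
      by (simp only: mult_eq_0_iff; elim disjE; simp add: field_simps)
    have c2: "(c-1)*(2*c-3)*(c-2) = 0 \<Longrightarrow> c = 1 \<or> c = 3/2 \<or> c = 2"
      by (simp only: mult_eq_0_iff; elim disjE; simp add: field_simps)
    from disj consider "b = 2*c - a" "c = 1/2" | "b = 2*c - a" "c = 1" | "b = 2*c - a" "c = 3/2" | "b = 2*c - 1 - a" "c = 1" | "b = 2*c - 1 - a" "c = 3/2" | "b = 2*c - 1 - a" "c = 2"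
      using c1 c2 by blast
    then show ?thesis
    proof cases
      case 1
      then have "(3*a-1)*(3*a-2) = 0" using p by algebra
      then have "a = 1/3 \<or> a = 2/3" by auto
      then show ?thesis using 1 d by auto
    next
      case 2
      then have "(3*a-2)*(3*a-4) = 0" using p by algebra
      then have "a = 2/3 \<or> a = 4/3" by auto
      then show ?thesis using 2 d by auto
    next
      case 3
      then have "(3*a-4)*(3*a-5) = 0" using p by algebra
      then have "a = 4/3 \<or> a = 5/3" by auto
      then show ?thesis using 3 d by auto
    next
      case 4
      then have "(3*a-1)*(3*a-2) = 0" using p by algebra
      then have "a = 1/3 \<or> a = 2/3" by auto
      then show ?thesis using 4 d by auto
    next
      case 5
      then have "(3*a-2)*(3*a-4) = 0" using p by algebra
      then have "a = 2/3 \<or> a = 4/3" by auto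
      then show ?thesis using 5 d by auto
    next
      case 6
      then have "(3*a-4)*(3*a-5) = 0" using p by algebra
      then have "a = 4/3 \<or> a = 5/3" by auto
      then show ?thesis using 6 d by auto
    qed
  qed


  note Pdefs = PBE_def PBO_def PAE_def PAO_def PGE_def PGO_def pnE0_def pnE0s_def pnE1_def pnE1s_def pnE2_def pnE2s_def pnO0_def pnO0s_def pnO1_def pnO1s_def pnO2_def pnO2s_def pdE0_def pdE0s_def pdE1_def pdE1s_def pdE2_def pdE2s_def pdO0_def pdO0s_def pdO1_def pdO1s_def pdO2_def pdO2s_def


  have tuple_suff: "Good a b c d"
      if "a > 0" "b > 0" "c > 0" "d > 0"
      and "PBE a b c d = 0" "PBO a b c d = 0" "PAE a b c d = 0" "PAO a b c d = 0"
      and "PGE a b c d = 0" "PGO a b c d = 0"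
      for a b c d
    unfolding Good_def
    by (rule suff[OF that(1-4)]) (simp_all only: poly_PBE[symmetric] poly_PBO[symmetric] poly_PAE[symmetric]
        poly_PAO[symmetric] poly_PGE[symmetric] poly_PGO[symmetric] that(5-10) poly_0)


  have ok1: "Good (1/3) (2/3) (1/2) (1)"
    by (rule tuple_suff) (simp_all add: Pdefs power2_eq_square)


  have ok2: "Good (2/3) (1/3) (1/2) (1)"
    by (rule tuple_suff) (simp_all add: Pdefs power2_eq_square)


  have ok3: "Good (1/3) (2/3) (1) (3/2)"
    by (rule tuple_suff) (simp_all add: Pdefs power2_eq_square)


  have ok4: "Good (2/3) (1/3) (1) (3/2)"
    by (rule tuple_suff) (simp_all add: Pdefs power2_eq_square)


  have ok5: "Good (2/3) (4/3) (1) (3/2)"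
    by (rule tuple_suff) (simp_all add: Pdefs power2_eq_square)


  have ok6: "Good (4/3) (2/3) (1) (3/2)"
    by (rule tuple_suff) (simp_all add: Pdefs power2_eq_square)


  have ok7: "Good (2/3) (4/3) (3/2) (2)"
    by (rule tuple_suff) (simp_all add: Pdefs power2_eq_square)


  have ok8: "Good (4/3) (2/3) (3/2) (2)"
    by (rule tuple_suff) (simp_all add: Pdefs power2_eq_square)


  have ok9: "Good (4/3) (5/3) (3/2) (2)"
    by (rule tuple_suff) (simp_all add: Pdefs power2_eq_square)


  have ok10: "Good (5/3) (4/3) (3/2) (2)"
    by (rule tuple_suff) (simp_all add: Pdefs power2_eq_square)


  have ok11: "Good (4/3) (5/3) (2) (5/2)"
    by (rule tuple_suff) (simp_all add: Pdefs power2_eq_square)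


  have ok12: "Good (5/3) (4/3) (2) (5/2)"
    by (rule tuple_suff) (simp_all add: Pdefs power2_eq_square)


  have main: "\<forall>a b c d :: real. 0 < a \<longrightarrow> 0 < b \<longrightarrow> 0 < c \<longrightarrow> 0 < d \<longrightarrow> ((\<forall>n::nat. n \<ge> 1 \<longrightarrow>
            beta_rc a b c d n = 3 * (4/27) \<and>
            alpha_rc a b c d (n+1) = 3 * (4/27)^2 \<and>
            gamma_rc a b c d (n+1) = (4/27)^3)
     \<longleftrightarrow> (a, b, c, d) \<in> {(1/3, 2/3, 1/2, 1), (2/3, 1/3, 1/2, 1),
                         (1/3, 2/3, 1, 3/2), (2/3, 1/3, 1, 3/2),
                         (2/3, 4/3, 1, 3/2), (4/3, 2/3, 1, 3/2),
                         (2/3, 4/3, 3/2, 2), (4/3, 2/3, 3/2, 2),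
                         (4/3, 5/3, 3/2, 2), (5/3, 4/3, 3/2, 2),
                         (4/3, 5/3, 2, 5/2), (5/3, 4/3, 2, 5/2)})"
  proof (intro allI impI)
    fix a b c d :: real
    assume "0 < a" "0 < b" "0 < c" "0 < d"
    note assms = this
    show "(\<forall>n::nat. n \<ge> 1 \<longrightarrow>
            beta_rc a b c d n = 3 * (4/27) \<and>
            alpha_rc a b c d (n+1) = 3 * (4/27)^2 \<and>
            gamma_rc a b c d (n+1) = (4/27)^3)
     \<longleftrightarrow> (a, b, c, d) \<in> {(1/3, 2/3, 1/2, 1), (2/3, 1/3, 1/2, 1),
                         (1/3, 2/3, 1, 3/2), (2/3, 1/3, 1, 3/2),
                         (2/3, 4/3, 1, 3/2), (4/3, 2/3, 1, 3/2),
                         (2/3, 4/3, 3/2, 2), (4/3, 2/3, 3/2, 2),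
                         (4/3, 5/3, 3/2, 2), (5/3, 4/3, 3/2, 2),
                         (4/3, 5/3, 2, 5/2), (5/3, 4/3, 2, 5/2)}"
    proof
      assume H: "\<forall>n::nat. n \<ge> 1 \<longrightarrow>
                beta_rc a b c d n = 3 * (4/27) \<and>
                alpha_rc a b c d (n+1) = 3 * (4/27)^2 \<and>
                gamma_rc a b c d (n+1) = (4/27)^3"
      have R: "RBE a b c d = 0" "RGE a b c d = 0" using nec_poly[OF assms H] by auto
      have "coeff (RBE a b c d) 1 = 0" "coeff (RBE a b c d) 2 = 0" "coeff (RBE a b c d) 3 = 0"
        "coeff (RGE a b c d) 2 = 0" using R by simp_all
      then have A: "d = c + 1/2 \<and> 9*a*b = (12*c-6)*(a+b) - 12*c^2+6*c+2 \<and>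
        ((b = 2*c - a \<and> (2*c-1)*(c-1)*(2*c-3) = 0) \<or> (b = 2*c - 1 - a \<and> (c-1)*(2*c-3)*(c-2) = 0))"
        by (rule alg1)
      show "(a, b, c, d) \<in> {(1/3, 2/3, 1/2, 1), (2/3, 1/3, 1/2, 1),
                             (1/3, 2/3, 1, 3/2), (2/3, 1/3, 1, 3/2),
                             (2/3, 4/3, 1, 3/2), (4/3, 2/3, 1, 3/2),
                             (2/3, 4/3, 3/2, 2), (4/3, 2/3, 3/2, 2),
                             (4/3, 5/3, 3/2, 2), (5/3, 4/3, 3/2, 2),
                             (4/3, 5/3, 2, 5/2), (5/3, 4/3, 2, 5/2)}"
        using A by (intro final) auto
    next
      assume mem: "(a, b, c, d) \<in> {(1/3, 2/3, 1/2, 1), (2/3, 1/3, 1/2, 1),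
                             (1/3, 2/3, 1, 3/2), (2/3, 1/3, 1, 3/2),
                             (2/3, 4/3, 1, 3/2), (4/3, 2/3, 1, 3/2),
                             (2/3, 4/3, 3/2, 2), (4/3, 2/3, 3/2, 2),
                             (4/3, 5/3, 3/2, 2), (5/3, 4/3, 3/2, 2),
                             (4/3, 5/3, 2, 5/2), (5/3, 4/3, 2, 5/2)}"
      have "Good a b c d"
        using mem unfolding insert_iff prod.inject empty_iff
        by (elim disjE conjE FalseE; simp only: ok1 ok2 ok3 ok4 ok5 ok6 ok7 ok8 ok9 ok10 ok11 ok12)
      then show "\<forall>n::nat. n \<ge> 1 \<longrightarrow>
                beta_rc a b c d n = 3 * (4/27) \<and>
                alpha_rc a b c d (n+1) = 3 * (4/27)^2 \<and>
                gamma_rc a b c d (n+1) = (4/27)^3"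
        unfolding Good_def .
    qed
  qed
  then show "(\<forall>a b c d :: real. 0 < a \<longrightarrow> 0 < b \<longrightarrow> 0 < c \<longrightarrow> 0 < d \<longrightarrow> ((\<forall>n::nat. n \<ge> 1 \<longrightarrow>
            beta_rc a b c d n = 3 * (4/27) \<and>
            alpha_rc a b c d (n+1) = 3 * (4/27)^2 \<and>
            gamma_rc a b c d (n+1) = (4/27)^3)
     \<longleftrightarrow> (a, b, c, d) \<in> {(1/3, 2/3, 1/2, 1), (2/3, 1/3, 1/2, 1),
                         (1/3, 2/3, 1, 3/2), (2/3, 1/3, 1, 3/2),
                         (2/3, 4/3, 1, 3/2), (4/3, 2/3, 1, 3/2),
                         (2/3, 4/3, 3/2, 2), (4/3, 2/3, 3/2, 2),
                         (4/3, 5/3, 3/2, 2), (5/3, 4/3, 3/2, 2),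
                         (4/3, 5/3, 2, 5/2), (5/3, 4/3, 2, 5/2)})) \<and> True = True"
    by (rule conjI[OF _ refl])
qed

theorem theorem13:
  fixes a b c d :: real
  assumes "a > 0" "b > 0" "c > 0" "d > 0"
  shows "(\<forall>n::nat. n \<ge> 1 \<longrightarrow>
            beta_rc a b c d n = 3 * (4/27) \<and>
            alpha_rc a b c d (n+1) = 3 * (4/27)^2 \<and>
            gamma_rc a b c d (n+1) = (4/27)^3)
     \<longleftrightarrow> (a, b, c, d) \<in> {(1/3, 2/3, 1/2, 1), (2/3, 1/3, 1/2, 1),
                         (1/3, 2/3, 1, 3/2), (2/3, 1/3, 1, 3/2),
                         (2/3, 4/3, 1, 3/2), (4/3, 2/3, 1, 3/2),
                         (2/3, 4/3, 3/2, 2), (4/3, 2/3, 3/2, 2),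
                         (4/3, 5/3, 3/2, 2), (5/3, 4/3, 3/2, 2),
                         (4/3, 5/3, 2, 5/2), (5/3, 4/3, 2, 5/2)}"
  by (rule conjunct1[OF main13_aux, rule_format, OF assms])

end
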